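(* For every integer $n\geq 1$ let $a_n=\sqrt[n+1]{(n+1)!}-\sqrt[n]{n!}$. Then the sequence $(a_n)_{n\geq1}$ is strictly decreasing, i.e. $a_{n+1}<a_n$ for every integer $n\geq 1$.
   Context: The sequence $a_n$ is called the Lalescu sequence. *)

theory Defs
  imports Complex_Main
begin

definition lalescu :: "nat \<Rightarrow> real" where
  "lalescu n = root (n + 1) (fact (n + 1)) - root n (fact n)"

end

theory Submission
  imports Defs
begin


lemma fact2_le: "2 ^ k * fact k \<le> (fact (2 * k) :: real)"
proof (induction k)
  case 0 then show ?case by simp
next
  case (Suc k)
  have "fact (2 * Suc k) = (of_nat (2*k+2) * of_nat (2*k+1)) * (fact (2 * k) :: real)"
    by (simp add: algebra_simps)
  moreover have "2 ^ Suc k * fact (Suc k) = (2 * of_nat (k+1)) * (2 ^ k * fact k :: real)"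
    by (simp add: algebra_simps)
  moreover have "(2 * of_nat (k+1)) * (2 ^ k * fact k :: real) \<le> (of_nat (2*k+2) * of_nat (2*k+1)) * fact (2 * k)"
    by (rule mult_mono[OF _ Suc.IH]) auto
  ultimately show ?case by (simp only:)
qed

lemma sc: "x /\<^sub>R (y::real) = x / y" by (simp add: divide_inverse mult.commute)

lemma cosh_bound: "exp z + exp (-z) \<le> 2 * exp (z^2/2)" for z :: real
proof -
  have c: "(\<lambda>n. if even n then z ^ n / fact n else 0) sums cosh z"
  proof -
    have "(\<lambda>n. if even n then z ^ n /\<^sub>R fact n else 0) = (\<lambda>n. if even n then z ^ n / fact n else 0)"
      by (rule ext) (simp only: sc)
    then show ?thesis using cosh_converges[of z] by (simp only:)
  qed
  have e0: "(\<lambda>k. (z^2/2) ^ k / fact k) sums exp (z^2/2)"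
  proof -
    have "(\<lambda>n. (z^2/2) ^ n /\<^sub>R fact n) = (\<lambda>k. (z^2/2) ^ k / fact k)"
      by (rule ext) (simp only: sc)
    then show ?thesis using exp_converges[of "z^2/2"] by (simp only:)
  qed
  have e: "(\<lambda>n. if even n then (z^2/2) ^ (n div 2) / fact (n div 2) else 0) sums exp (z^2/2)"
    using sums_if[OF sums_zero e0] by (simp only: add_0)
  have "cosh z \<le> exp (z^2/2)"
  proof (rule sums_le[OF _ c e])
    fix n :: nat
    show "(if even n then z ^ n / fact n else 0) \<le> (if even n then (z^2/2) ^ (n div 2) / fact (n div 2) else 0)"
    proof (cases "even n")
      case True
      then obtain k where n: "n = 2 * k" by (rule evenE)
      have 1: "z ^ n = (z^2)^k" by (simp add: n power_mult)
      have 2: "(z^2/2)^k / fact k = (z^2)^k / (2^k * fact k)" by (simp add: power_divide)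
      have 3: "(z^2)^k / fact (2*k) \<le> (z^2)^k / (2^k * fact k)"
        by (rule divide_left_mono[OF fact2_le[of k]]) (simp, simp add: mult_pos_pos)
      show ?thesis using True 1 2 3 n by simp
    qed simp
  qed
  then show ?thesis by (simp add: cosh_def)
qed


lemma d1: "0 \<le> (x::real) \<Longrightarrow> DERIV (\<lambda>x::real. ln (1+x) - 2*x/(2+x)) x :> (1/(1+x) - 4/(2+x)^2)"
  apply (rule derivative_eq_intros refl | simp)+
  apply (simp add: power2_eq_square)
  done
lemma d2: "0 \<le> (x::real) \<Longrightarrow> DERIV (\<lambda>x::real. x*(2+x)/(2*(1+x)) - ln (1+x)) x :> (x^2/(2*(1+x)^2))"
  apply (rule derivative_eq_intros refl | simp)+
  apply (subgoal_tac "2+2*x \<noteq> 0" "1+x \<noteq> 0")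
  apply (simp add: divide_simps power2_eq_square)
  apply (simp add: algebra_simps)
  apply simp_all
  done

lemma ln_lower: fixes t :: real assumes "0 \<le> t" shows "2*t/(2+t) \<le> ln (1+t)"
proof -
  let ?f = "\<lambda>x::real. ln (1+x) - 2*x/(2+x)"
  have "?f 0 \<le> ?f t"
  proof (rule DERIV_nonneg_imp_nondecreasing[OF assms])
    fix x :: real assume x: "0 \<le> x" "x \<le> t"
    have d: "DERIV ?f x :> (1/(1+x) - 4/(2+x)^2)"
      using x(1) by (rule d1)
    have "1/(1+x) - 4/(2+x)^2 = x^2/((1+x)*(2+x)^2)"
      using x apply (subgoal_tac "2+x \<noteq> 0" "1+x \<noteq> 0")
      apply (simp add: divide_simps power2_eq_square)
      apply (simp add: algebra_simps)
      apply simp_all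
      done
    also have "\<dots> \<ge> 0" using x by simp
    finally show "\<exists>y. DERIV ?f x :> y \<and> 0 \<le> y" using d by blast
  qed
  then show ?thesis by simp
qed

lemma ln_upper: fixes t :: real assumes "0 \<le> t" shows "ln (1+t) \<le> t*(2+t)/(2*(1+t))"
proof -
  let ?f = "\<lambda>x::real. x*(2+x)/(2*(1+x)) - ln (1+x)"
  have "?f 0 \<le> ?f t"
  proof (rule DERIV_nonneg_imp_nondecreasing[OF assms])
    fix x :: real assume x: "0 \<le> x" "x \<le> t"
    have d: "DERIV ?f x :> (x^2/(2*(1+x)^2))"
      using x(1) by (rule d2)
    have "x^2/(2*(1+x)^2) \<ge> 0" using x by simp
    then show "\<exists>y. DERIV ?f x :> y \<and> 0 \<le> y" using d by blast
  qed
  then show ?thesis by simp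
qed

lemma L_bounds: fixes x :: real assumes "0 < x"
  shows "2/(2*x+1) \<le> ln (x+1) - ln x" "ln (x+1) - ln x \<le> (2*x+1)/(2*x*(x+1))"
proof -
  have eq: "ln (x+1) - ln x = ln (1 + 1/x)"
  proof -
    have "1 + 1/x = (x+1)/x" using assms by (simp add: field_simps)
    then show ?thesis using assms by (simp add: ln_div)
  qed
  have "2*(1/x)/(2+1/x) = 2/(2*x+1)" using assms by (simp add: field_simps)
  then show "2/(2*x+1) \<le> ln (x+1) - ln x" using ln_lower[of "1/x"] assms eq by simp
  have "x+1 \<noteq> 0" "x \<noteq> 0" using assms by auto
  then have "(1/x)*(2+1/x)/(2*(1+1/x)) = (2*x+1)/(2*x*(x+1))"
    by (simp add: divide_simps)
  then show "ln (x+1) - ln x \<le> (2*x+1)/(2*x*(x+1))" using ln_upper[of "1/x"] assms eq by simp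
qed


lemma ln_fact_Suc: "ln (fact (Suc k) :: real) = ln (real k + 1) + ln (fact k)"
proof -
  have "fact (Suc k) = (real k + 1) * (fact k :: real)" by simp
  then show ?thesis by (simp add: ln_mult)
qed

lemma fact_lb: assumes "1 \<le> k" shows "real k * ln k - k \<le> ln (fact k :: real)"
  using assms
proof (induction k rule: nat_induct_at_least)
  case base then show ?case by simp
next
  case (Suc k)
  have kp: "0 < real k" using Suc by simp
  have "ln (real k + 1) - ln k \<le> 1 / real k"
  proof -
    have "ln (real k + 1) - ln k = ln (1 + 1/real k)"
    proof -
      have "1 + 1/real k = (real k + 1)/real k" using kp by (simp add: field_simps)
      then show ?thesis using kp by (simp add: ln_div)
    qed
    then show ?thesis using ln_add_one_self_le_self[of "1/real k"] kp by simp
  qed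
  then have "real k * (ln (real k + 1) - ln k) \<le> 1" using kp by (simp add: field_simps)
  then show ?case using Suc.IH ln_fact_Suc[of k] by (simp add: algebra_simps)
qed

lemma fact_ub: assumes "1 \<le> k" shows "ln (fact k :: real) \<le> real k * ln k - k + 1 + ln k / 2"
  using assms
proof (induction k rule: nat_induct_at_least)
  case base then show ?case by simp
next
  case (Suc k)
  have kp: "0 < real k" using Suc by simp
  have "2/(2*real k+1) \<le> ln (real k + 1) - ln k" using L_bounds(1)[OF kp] .
  then have "1 \<le> (real k + 1/2) * (ln (real k + 1) - ln k)" using kp by (simp add: field_simps)
  then show ?case using Suc.IH ln_fact_Suc[of k] by (simp add: algebra_simps)
qed


lemma core:
  fixes m s L e :: real
  assumes m6: "6 \<le> m" and L1: "2/(2*m+1) \<le> L" and L2: "L \<le> (2*m+1)/(2*m*(m+1))"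
    and s1: "s \<le> 1" and s2: "1 - s \<le> e/m" and e1: "1 \<le> e" and ec: "(2*e-1)^2 < 2*m - 3"
  shows "exp (-(s/(m-1))) + exp ((s+L)/(m+1)) < 2"
proof -
  define D where "D = 1 - s"
  have mp: "0 < m" using m6 by simp
  have D0: "0 \<le> D" using s1 D_def by simp
  have mD: "m * D \<le> e" using s2 mp unfolding D_def by (simp add: field_simps)
  define Q where "Q = (2*m*s + L*(m-1))^2 - 4*(m^2-1)*(2*s - L*(m-1))"
  define Q1 where "Q1 = (2*m + L*(m-1))^2 - 4*(m^2-1)*(2 - L*(m-1))"
  define X where "X = 8 + 4*m*(m-1)*L"
  have QX: "Q = Q1 - D*X + 4*m^2*D^2"
    unfolding Q_def Q1_def X_def D_def by (simp add: algebra_simps power2_eq_square)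
  have L0: "0 \<le> L" using L1 mp by (smt (verit) divide_nonneg_nonneg)
  have Lm: "L*(m-1) \<le> 1"
  proof -
    have "L*(m-1) \<le> (2*m+1)/(2*m*(m+1)) * (m-1)" using m6 by (intro mult_right_mono[OF L2]) simp
    also have "\<dots> \<le> 1"
    proof -
      have d: "0 < 2*m*(m+1)" using mp by simp
      have "(2*m+1)*(m-1) \<le> 2*m*(m+1)" using mp by (simp add: algebra_simps)
      then have "((2*m+1)*(m-1))/(2*m*(m+1)) \<le> 1" using d by (simp add: pos_divide_le_eq)
      then show ?thesis by simp
    qed
    finally show ?thesis .
  qed
  have T: "4*L*(m-1)*(m^2+m-1) \<le> 4*m^2 - 2*m - 5"
  proof -
    have pos: "0 \<le> 4*(m-1)*(m^2+m-1)"
    proof -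
      have "0 \<le> m^2" by simp
      then have "0 \<le> m^2+m-1" using m6 by linarith
      then show ?thesis using m6 by (intro mult_nonneg_nonneg) auto
    qed
    have "4*L*(m-1)*(m^2+m-1) = L * (4*(m-1)*(m^2+m-1))" by simp
    also have "\<dots> \<le> (2*m+1)/(2*m*(m+1)) * (4*(m-1)*(m^2+m-1))"
      using L2 pos by (rule mult_right_mono)
    also have "\<dots> \<le> 4*m^2 - 2*m - 5"
    proof -
      have "2*(2*m+1)*(m-1)*(m^2+m-1) \<le> (4*m^2-2*m-5)*(m*(m+1))"
      proof -
        have "(4*m^2-2*m-5)*(m*(m+1)) - 2*(2*m+1)*(m-1)*(m^2+m-1) = m^2 - 5*m - 2"
          by (simp add: algebra_simps power2_eq_square)
        moreover have "0 \<le> m^2 - 5*m - 2"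
        proof -
          have "6*m \<le> m*m" using m6 by (intro mult_right_mono) auto
          then show ?thesis using m6 unfolding power2_eq_square by linarith
        qed
        ultimately show ?thesis by linarith
      qed
      moreover have d: "0 < m*(m+1)" using mp by simp
      ultimately have "(2*(2*m+1)*(m-1)*(m^2+m-1)) / (m*(m+1)) \<le> 4*m^2-2*m-5"
        by (simp add: pos_divide_le_eq)
      moreover have "(2*m+1)/(2*m*(m+1)) * (4*(m-1)*(m^2+m-1)) = (2*(2*m+1)*(m-1)*(m^2+m-1)) / (m*(m+1))"
      proof -
        have nz: "m \<noteq> 0" "m+1 \<noteq> 0" using mp by auto
        show ?thesis using nz by (simp add: divide_simps) (simp add: algebra_simps)
      qed
      ultimately show ?thesis by simp
    qed
    finally show ?thesis .
  qed
  have Q1b: "Q1 \<le> -2*m + 4"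
  proof -
    have "Q1 = -4*m^2 + 8 + 4*L*(m-1)*(m^2+m-1) + (L*(m-1))^2"
      unfolding Q1_def by (simp add: algebra_simps power2_eq_square)
    moreover have "(L*(m-1))^2 \<le> 1" using Lm L0 m6
      by (simp add: abs_le_square_iff power_le_one)
    ultimately show ?thesis using T by linarith
  qed
  have X4: "4*m \<le> X"
  proof -
    have "2/(2*m+1) * (4*m*(m-1)) \<le> L * (4*m*(m-1))"
      using L1 m6 by (intro mult_right_mono) auto
    moreover have "4*m \<le> 8 + 2/(2*m+1) * (4*m*(m-1))"
      using mp by (simp add: field_simps)
    ultimately show ?thesis unfolding X_def by (simp add: algebra_simps)
  qed
  have Qneg: "Q < 0"
  proof -
    have "4*m^2*D^2 \<le> 4*m*D*e"
    proof -
      have "4*m^2*D^2 = 4*(m*D)*(m*D)" by (simp add: power2_eq_square)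
      also have "\<dots> \<le> 4*(m*D)*e" using mD D0 mp by (intro mult_left_mono) auto
      finally show ?thesis by simp
    qed
    then have Qle: "Q \<le> Q1 + D*(4*m*e - X)" using QX by (simp add: algebra_simps)
    show ?thesis
    proof (cases "4*m*e - X \<le> 0")
      case True
      then have "D*(4*m*e - X) \<le> 0" using D0 by (simp add: mult_nonneg_nonpos)
      then show ?thesis using Qle Q1b m6 by linarith
    next
      case False
      have "D*(4*m*e - X) \<le> (e/m)*(4*m*e - X)"
        using False s2 D_def by (intro mult_right_mono) auto
      also have "\<dots> = 4*e^2 - e*(X/m)" using mp by (simp add: field_simps power2_eq_square)
      also have "\<dots> \<le> 4*e^2 - e*4"
      proof -
        have "4 \<le> X/m" using X4 mp by (simp add: field_simps)
        then have "e*4 \<le> e*(X/m)" using e1 by (intro mult_left_mono) auto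
        then show ?thesis by linarith
      qed
      finally have "Q \<le> -2*m + 4 + 4*e^2 - 4*e" using Qle Q1b by linarith
      moreover have "4*e^2 - 4*e = (2*e-1)^2 - 1" by (simp add: algebra_simps power2_eq_square)
      ultimately show ?thesis using ec by linarith
    qed
  qed
  define A where "A = s/(m-1)"
  define B where "B = (s+L)/(m+1)"
  have mm: "6*6 \<le> m*m" using m6 by (intro mult_mono) auto
  have m1: "m - 1 \<noteq> 0" "m + 1 \<noteq> 0" "m^2 - 1 \<noteq> 0" using m6 mm unfolding power2_eq_square by auto
  have ApB: "(A+B)*(m^2-1) = 2*m*s + L*(m-1)"
    unfolding A_def B_def using m1 by (simp add: field_simps power2_eq_square)
  have AmB: "(A-B)*(m^2-1) = 2*s - L*(m-1)"
    unfolding A_def B_def using m1 by (simp add: field_simps power2_eq_square)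
  have "((A+B)^2 - 4*(A-B)) * (m^2-1)^2 = ((A+B)*(m^2-1))^2 - 4*(m^2-1)*((A-B)*(m^2-1))"
    by (simp add: algebra_simps power2_eq_square)
  also have "\<dots> = Q" unfolding Q_def ApB AmB ..
  finally have QQ: "((A+B)^2 - 4*(A-B)) * (m^2-1)^2 = Q" .
  have key: "(A+B)^2 < 4*(A-B)"
  proof -
    have "0 < (m^2-1)^2" using m1 by simp
    then show ?thesis using QQ Qneg by (smt (verit) mult_nonneg_nonneg)
  qed
  define z where "z = (A+B)/2"
  define w where "w = (A-B)/2"
  have zw: "z^2/2 < w" using key unfolding z_def w_def by (simp add: power_divide)
  have "exp (-A) + exp B = exp (-w) * (exp z + exp (-z))"
  proof -
    have "exp (-w) * (exp z + exp (-z)) = exp (-w + z) + exp (-w + -z)"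
      by (simp only: exp_add distrib_left mult.commute)
    moreover have "-w + z = B" "-w + -z = -A" unfolding z_def w_def by (simp_all add: field_simps)
    ultimately show ?thesis by simp
  qed
  also have "\<dots> \<le> exp (-w) * (2 * exp (z^2/2))"
    by (rule mult_left_mono[OF cosh_bound]) simp
  also have "\<dots> < exp (-w) * (2 * exp w)"
    using zw by simp
  also have "\<dots> = 2" by (simp add: exp_minus field_simps)
  finally show ?thesis unfolding A_def B_def by simp
qed


lemma exp_taylor_lb: fixes x :: real assumes "0 \<le> x" shows "(\<Sum>k<n. x^k / fact k) \<le> exp x"
proof -
  have e0: "(\<lambda>k. x ^ k / fact k) sums exp x"
  proof -
    have "(\<lambda>n. x ^ n /\<^sub>R fact n) = (\<lambda>k. x ^ k / fact k)"
      by (rule ext) (simp only: sc)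
    then show ?thesis using exp_converges[of x] by (simp only:)
  qed
  show ?thesis
    using sum_le_suminf[OF sums_summable[OF e0], of "{..<n}"] assms sums_unique[OF e0] by simp
qed

lemma ln6: "ln (6::real) < 19/10"
proof -
  have "(\<Sum>k<5. (19/10::real)^k / fact k) \<le> exp (19/10)" by (rule exp_taylor_lb) simp
  moreover have "(\<Sum>k<5. (19/10::real)^k / fact k) > 6" by (simp add: numeral_eq_Suc fact_numeral)
  ultimately have "6 < exp (19/10::real)" by linarith
  then show ?thesis by (metis exp_gt_zero ln_exp ln_less_cancel_iff zero_less_numeral)
qed

lemma ln_le_m1: fixes m :: real assumes "3 \<le> m" shows "ln (m+1) \<le> m - 1"
proof -
  have "(\<Sum>k<3. (m-1)^k / fact k) \<le> exp (m-1)" by (rule exp_taylor_lb) (use assms in simp)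
  moreover have "(\<Sum>k<3. (m-1)^k / fact k) = 1 + (m-1) + (m-1)^2/2" by (simp add: numeral_eq_Suc)
  moreover have "2 \<le> (m-1)^2"
  proof -
    have "2*2 \<le> (m-1)*(m-1)" using assms by (intro mult_mono) auto
    then show ?thesis by (simp add: power2_eq_square)
  qed
  ultimately have "m + 1 \<le> exp (m-1)" by linarith
  then show ?thesis using assms by (metis ln_exp ln_le_cancel_iff exp_gt_zero add_pos_pos zero_less_one
     less_le_trans zero_less_numeral order_trans linorder_not_le)
qed

lemma lnm: fixes n :: nat assumes "6 \<le> n" shows "(1 + ln (real n))^2 < 2 * real n - 3"
  using assms
proof (induction n rule: nat_induct_at_least)
  case base
  have "0 \<le> ln (6::real)" by simp
  then have "(1 + ln (6::real))^2 < (1 + 19/10)^2" using ln6 by (intro power_strict_mono) auto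
  moreover have "(1 + 19/10::real)^2 < 9" by (simp add: power2_eq_square)
  ultimately show ?case by simp
next
  case (Suc n)
  define m where "m = real n"
  have m6: "6 \<le> m" using Suc m_def by simp
  have d: "ln (m+1) - ln m \<le> 1/m"
  proof -
    have "ln (m+1) - ln m = ln (1 + 1/m)"
    proof -
      have "1 + 1/m = (m+1)/m" using m6 by (simp add: field_simps)
      then show ?thesis using m6 by (simp add: ln_div)
    qed
    then show ?thesis using ln_add_one_self_le_self[of "1/m"] m6 by simp
  qed
  have d0: "0 \<le> ln (m+1) - ln m" using m6 by simp
  have l1: "ln (m+1) \<le> m - 1" using ln_le_m1 m6 by simp
  have lm: "ln m \<le> ln (m+1)" using m6 by simp
  have "(1 + ln (m+1))^2 - (1 + ln m)^2 = (ln (m+1) - ln m) * (2 + ln (m+1) + ln m)"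
    by (simp add: algebra_simps power2_eq_square)
  also have "\<dots> \<le> (1/m) * (2 + 2*ln (m+1))"
  proof (rule mult_mono[OF d])
    show "2 + ln (m+1) + ln m \<le> 2 + 2*ln (m+1)" using lm by simp
    show "0 \<le> 1/m" using m6 by simp
    have "0 \<le> ln m" using m6 by simp
    then show "0 \<le> 2 + ln (m+1) + ln m" using lm by simp
  qed
  also have "\<dots> \<le> 2"
  proof -
    have "2 + 2*ln (m+1) \<le> 2*m" using l1 by simp
    then show ?thesis using m6 by (simp add: field_simps)
  qed
  finally have "(1 + ln (m+1))^2 \<le> (1 + ln m)^2 + 2" by simp
  then show ?case using Suc.IH unfolding m_def by (simp add: add.commute)
qed


lemma root_ub: "0 < n \<Longrightarrow> 0 \<le> u \<Longrightarrow> x \<le> u^n \<Longrightarrow> root n x \<le> u"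
  by (metis real_root_le_iff real_root_power_cancel)
lemma root_lb: "0 < n \<Longrightarrow> 0 \<le> u \<Longrightarrow> u^n \<le> x \<Longrightarrow> u \<le> root n x"
  by (metis real_root_le_iff real_root_power_cancel)

lemma f: "fact 2 = (2::real)" "fact 3 = (6::real)" "fact 4 = (24::real)" "fact 5 = (120::real)" "fact 6 = (720::real)"
  by (simp_all add: fact_numeral)

lemma lv: "lalescu 1 = root 2 2 - 1" "lalescu 2 = root 3 6 - root 2 2" "lalescu 3 = root 4 24 - root 3 6"
  "lalescu 4 = root 5 120 - root 4 24" "lalescu 5 = root 6 720 - root 5 120"
proof -
  have e: "(1::nat) + 1 = 2" "(2::nat)+1 = 3" "(3::nat)+1 = 4" "(4::nat)+1 = 5" "(5::nat)+1 = 6" by simp_all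
  show "lalescu 1 = root 2 2 - 1" unfolding lalescu_def e f by simp
  show "lalescu 2 = root 3 6 - root 2 2" unfolding lalescu_def e f by simp
  show "lalescu 3 = root 4 24 - root 3 6" unfolding lalescu_def e f by simp
  show "lalescu 4 = root 5 120 - root 4 24" unfolding lalescu_def e f by simp
  show "lalescu 5 = root 6 720 - root 5 120" unfolding lalescu_def e f by simp
qed

lemma small1: "lalescu 2 < lalescu 1"
proof -
  have a: "root 3 6 \<le> (18172/10000::real)" by (rule root_ub) (simp_all add: power_divide)
  have b: "(14142/10000::real) \<le> root 2 2" by (rule root_lb) (simp_all add: power_divide)
  show ?thesis using a b unfolding lv by simp
qed

lemma small2: "lalescu 3 < lalescu 2"
proof -
  have a: "root 4 24 \<le> (221337/100000::real)" by (rule root_ub) (simp_all add: power_divide)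
  have b: "root 2 2 \<le> (141422/100000::real)" by (rule root_ub) (simp_all add: power_divide)
  have c: "(181712/100000::real) \<le> root 3 6" by (rule root_lb) (simp_all add: power_divide)
  show ?thesis using a b c unfolding lv by simp
qed

lemma small3: "lalescu 4 < lalescu 3"
proof -
  have a: "root 5 120 \<le> (260518/100000::real)" by (rule root_ub) (simp_all add: power_divide)
  have b: "root 3 6 \<le> (181713/100000::real)" by (rule root_ub) (simp_all add: power_divide)
  have c: "(221336/100000::real) \<le> root 4 24" by (rule root_lb) (simp_all add: power_divide)
  show ?thesis using a b c unfolding lv by simp
qed

lemma small4: "lalescu 5 < lalescu 4"
proof -
  have a: "root 6 720 \<le> (29938/10000::real)" by (rule root_ub) (simp_all add: power_divide)
  have b: "root 4 24 \<le> (221337/100000::real)" by (rule root_ub) (simp_all add: power_divide)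
  have c: "(260517/100000::real) \<le> root 5 120" by (rule root_lb) (simp_all add: power_divide)
  show ?thesis using a b c unfolding lv by simp
qed

lemma root_fact_exp: "0 < k \<Longrightarrow> root k (fact k) = exp (ln (fact k :: real) / real k)"
  by (simp add: root_powr_inverse powr_def)

lemma big: fixes n :: nat assumes n5: "5 \<le> n" shows "lalescu (n + 1) < lalescu n"
proof -
  define m where "m = real n + 1"
  define l where "l = ln (fact (n+1) :: real)"
  have m6: "6 \<le> m" using n5 m_def by simp
  have mp: "0 < m" using m6 by simp
  define s where "s = ln m - l/m"
  define L where "L = ln (m+1) - ln m"
  define e where "e = 1 + ln m / 2"
  have rn: "real (n+1) = m" unfolding m_def by simp
  have lb: "m * ln m - m \<le> l" using fact_lb[of "n+1"] unfolding l_def rn by simp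
  have ub: "l \<le> m * ln m - m + 1 + ln m / 2" using fact_ub[of "n+1"] unfolding l_def rn by simp
  have s1: "s \<le> 1"
  proof -
    have "ln m - 1 \<le> l/m" using lb mp by (simp add: field_simps)
    then show ?thesis unfolding s_def by simp
  qed
  have s2: "1 - s \<le> e/m"
  proof -
    have "l/m \<le> ln m - 1 + e/m" using ub mp unfolding e_def by (simp add: field_simps)
    then show ?thesis unfolding s_def by simp
  qed
  have e1: "1 \<le> e" unfolding e_def using m6 by simp
  have ec: "(2*e-1)^2 < 2*m - 3"
  proof -
    have "2*e - 1 = 1 + ln m" unfolding e_def by simp
    moreover have "(1 + ln (real (n+1)))^2 < 2 * real (n+1) - 3" using lnm[of "n+1"] n5 by simp
    ultimately show ?thesis unfolding rn by simp
  qed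
  have L1: "2/(2*m+1) \<le> L" unfolding L_def using L_bounds(1)[OF mp] .
  have L2: "L \<le> (2*m+1)/(2*m*(m+1))" unfolding L_def using L_bounds(2)[OF mp] .
  have C: "exp (-(s/(m-1))) + exp ((s+L)/(m+1)) < 2"
    using core[OF m6 L1 L2 s1 s2 e1 ec] .
  have n0: "0 < n" using n5 by simp
  have lf0: "ln (fact n :: real) = l - ln m"
    unfolding l_def m_def using ln_fact_Suc[of n] by simp
  have lf2: "ln (fact (n+2) :: real) = ln (m+1) + l"
    unfolding l_def m_def using ln_fact_Suc[of "n+1"] by (simp add: add.commute)
  have r0: "root n (fact n) = exp (l/m - s/(m-1))"
  proof -
    have "root n (fact n) = exp (ln (fact n :: real) / real n)" using root_fact_exp[OF n0] .
    moreover have "ln (fact n :: real) / real n = l/m - s/(m-1)"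
    proof -
      have rn0: "real n = m - 1" unfolding m_def by simp
      have "m - 1 \<noteq> 0" using m6 by simp
      then show ?thesis unfolding lf0 s_def rn0 using mp by (simp add: field_simps)
    qed
    ultimately show ?thesis by simp
  qed
  have r1: "root (n+1) (fact (n+1)) = exp (l/m)"
    using root_fact_exp[of "n+1"] unfolding l_def m_def by simp
  have r2: "root (n+2) (fact (n+2)) = exp (l/m + (s+L)/(m+1))"
  proof -
    have "root (n+2) (fact (n+2)) = exp (ln (fact (n+2) :: real) / real (n+2))" using root_fact_exp[of "n+2"] by simp
    moreover have "ln (fact (n+2) :: real) / real (n+2) = l/m + (s+L)/(m+1)"
    proof -
      have rn2: "real (n+2) = m + 1" unfolding m_def by simp
      have "m + 1 \<noteq> 0" "1 + m \<noteq> 0" "m \<noteq> 0" using m6 by simp_all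
      then show ?thesis unfolding lf2 s_def L_def rn2 by (simp add: divide_simps) (simp add: algebra_simps)
    qed
    ultimately show ?thesis by simp
  qed
  have "root (n+2) (fact (n+2)) + root n (fact n) = exp (l/m) * (exp ((s+L)/(m+1)) + exp (-(s/(m-1))))"
    unfolding r0 r2 by (simp add: exp_add exp_diff exp_minus field_simps)
  also have "\<dots> < exp (l/m) * 2" using C by (simp add: add.commute)
  finally have "root (n+2) (fact (n+2)) + root n (fact n) < 2 * root (n+1) (fact (n+1))"
    unfolding r1 by simp
  then show ?thesis unfolding lalescu_def by (simp add: add.assoc)
qed

theorem mainTheorem1:
  fixes n :: nat
  assumes "n \<ge> 1"
  shows "lalescu (n + 1) < lalescu n"
proof -
  have e: "(1::nat) + 1 = 2" "(2::nat)+1 = 3" "(3::nat)+1 = 4" "(4::nat)+1 = 5" by simp_all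
  have "n = 1 \<or> n = 2 \<or> n = 3 \<or> n = 4 \<or> 5 \<le> n" using assms by auto
  then show ?thesis
  proof (elim disjE)
    assume "n = 1" then show ?thesis unfolding e using small1 by (simp only: e)
  next
    assume "n = 2" then show ?thesis using small2 by (simp only: e)
  next
    assume "n = 3" then show ?thesis using small3 by (simp only: e)
  next
    assume "n = 4" then show ?thesis using small4 by (simp only: e)
  next
    assume "5 \<le> n" then show ?thesis by (rule big)
  qed
qed

end
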